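(* Let $G$ be a finite abelian group and $S\subseteq G$ an interval of $G$. Then $\mathrm{sh}_G(S)\le 2$.
   Context: Shape parameter: for a finite abelian group $G$ (written multiplicatively), $G^\vee=\mathrm{Hom}(G,\mathbb C^* )$ with trivial character $\chi_0$. For $f=\sum_{g\in G}c_g g\in\mathbb C[G]$ and $\chi\in G^\vee$ put $f_\chi=\sum_g c_g\chi(g^{-1})$. For $S\subseteq G$ let $\mathbb C[S]=\{\sum_{s\in S}c_ss\}\subseteq\mathbb C[G]$. The shape parameter is $\mathrm{sh}_G(S)=\frac{\#S}{\#G}\inf\left\{\frac{\sum_{\chi\in G^\vee}|f_\chi|}{|f_{\chi_0}|}: f\in\mathbb C[S],\ f_{\chi_0}\neq0\right\}$. Intervals: an interval of $\mathbb Z$ is a nonempty set $[n,m]\cap\mathbb Z$ with $n,m\in\mathbb R$. A standard interval of $\mathbb Z/n\mathbb Z$ is the image of an interval of $\mathbb Z$. In a finite abelian group $G$, a full interval is a set $\pi^{-1}(T)$ where $\pi:G\to\mathbb Z/n\mathbb Z$ is a surjective homomorphism ($n\ge1$) and $T$ a standard interval of $\mathbb Z/n\mathbb Z$; an interval of $G$ is a full interval of some subgroup of $G$. *)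

theory Defs
  imports "HOL-Analysis.Analysis" "HOL-Algebra.Algebra"
begin

definition characters :: "('a, 'b) monoid_scheme \<Rightarrow> ('a \<Rightarrow> complex) set" where
  "characters G = {\<psi>. \<psi> \<in> extensional (carrier G) \<and>
      (\<forall>x\<in>carrier G. \<psi> x \<noteq> 0) \<and>
      (\<forall>x\<in>carrier G. \<forall>y\<in>carrier G. \<psi> (x \<otimes>\<^bsub>G\<^esub> y) = \<psi> x * \<psi> y)}"

definition trivial_character :: "('a, 'b) monoid_scheme \<Rightarrow> 'a \<Rightarrow> complex" where
  "trivial_character G = (\<lambda>x\<in>carrier G. 1)"

text \<open>Elements of C[G] are coefficient functions c (c g = coefficient of g).
  Fourier coefficient f_chi = sum_g c_g chi(g^{-1}).\<close>
definition fourier_coeff :: "('a, 'b) monoid_scheme \<Rightarrow> ('a \<Rightarrow> complex) \<Rightarrow> ('a \<Rightarrow> complex) \<Rightarrow> complex" where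
  "fourier_coeff G c \<psi> = (\<Sum>g\<in>carrier G. c g * \<psi> (inv\<^bsub>G\<^esub> g))"

definition shape_param :: "('a, 'b) monoid_scheme \<Rightarrow> 'a set \<Rightarrow> real" where
  "shape_param G S = real (card S) / real (card (carrier G)) *
     Inf {(\<Sum>\<psi>\<in>characters G. cmod (fourier_coeff G c \<psi>)) / cmod (fourier_coeff G c (trivial_character G)) | c.
           (\<forall>g. g \<notin> S \<longrightarrow> c g = 0) \<and> fourier_coeff G c (trivial_character G) \<noteq> 0}"

definition Z_interval :: "int set \<Rightarrow> bool" where
  "Z_interval J \<longleftrightarrow> J \<noteq> {} \<and> (\<exists>(a::real) (b::real). J = {k :: int. a \<le> of_int k \<and> of_int k \<le> b})"

text \<open>Standard interval of Z/nZ (represented by integer_mod_group n, carrier {0..<n}).\<close>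
definition ZnZ_std_interval :: "nat \<Rightarrow> int set \<Rightarrow> bool" where
  "ZnZ_std_interval n T \<longleftrightarrow> (\<exists>J. Z_interval J \<and> T = (\<lambda>k. k mod int n) ` J)"

definition full_interval :: "('a, 'b) monoid_scheme \<Rightarrow> 'a set \<Rightarrow> bool" where
  "full_interval H S \<longleftrightarrow> (\<exists>(n::nat) \<pi> T. n \<ge> 1 \<and>
       \<pi> \<in> hom H (integer_mod_group n) \<and> \<pi> ` carrier H = carrier (integer_mod_group n) \<and>
       ZnZ_std_interval n T \<and> S = {x \<in> carrier H. \<pi> x \<in> T})"

definition group_interval :: "('a, 'b) monoid_scheme \<Rightarrow> 'a set \<Rightarrow> bool" where
  "group_interval G S \<longleftrightarrow> (\<exists>H. subgroup H G \<and> full_interval (G\<lparr>carrier := H\<rparr>) S)"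

end

theory Submission
  imports Defs
begin


lemma unit_cnj:
  fixes z :: complex
  assumes "norm z = 1" shows "z * cnj z = 1" "cnj z * z = 1"
proof -
  have "z * cnj z = of_real ((norm z)^2)" by (rule complex_norm_square[symmetric])
  also have "\<dots> = 1" using assms by simp
  finally show "z * cnj z = 1" .
  then show "cnj z * z = 1" by (simp add: mult.commute)
qed

lemma char_one:
  assumes G: "group G" and c: "\<xi> \<in> characters G"
  shows "\<xi> \<one>\<^bsub>G\<^esub> = 1"
proof -
  have o: "\<one>\<^bsub>G\<^esub> \<in> carrier G" using G by (simp add: group.is_monoid monoid.one_closed)
  have "\<xi> (\<one>\<^bsub>G\<^esub> \<otimes>\<^bsub>G\<^esub> \<one>\<^bsub>G\<^esub>) = \<xi> \<one>\<^bsub>G\<^esub> * \<xi> \<one>\<^bsub>G\<^esub>"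
    using c o unfolding characters_def by blast
  hence "\<xi> \<one>\<^bsub>G\<^esub> = \<xi> \<one>\<^bsub>G\<^esub> * \<xi> \<one>\<^bsub>G\<^esub>" using G o by (simp add: group.is_monoid monoid.l_one)
  moreover have "\<xi> \<one>\<^bsub>G\<^esub> \<noteq> 0" using c o unfolding characters_def by blast
  ultimately show ?thesis by (metis mult_cancel_left1)
qed

lemma char_pow:
  assumes G: "group G" and c: "\<xi> \<in> characters G" and g: "g \<in> carrier G"
  shows "\<xi> (g [^]\<^bsub>G\<^esub> (k::nat)) = \<xi> g ^ k"
proof (induction k)
  case 0 then show ?case using char_one[OF G c] by simp
next
  case (Suc k)
  have "\<xi> (g [^]\<^bsub>G\<^esub> Suc k) = \<xi> (g [^]\<^bsub>G\<^esub> k \<otimes>\<^bsub>G\<^esub> g)"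
    using G by (simp add: group.is_monoid monoid.nat_pow_Suc)
  also have "\<dots> = \<xi> (g [^]\<^bsub>G\<^esub> k) * \<xi> g"
    using c g G by (simp add: characters_def group.is_monoid monoid.nat_pow_closed)
  finally show ?case using Suc by simp
qed

lemma char_norm:
  assumes G: "group G" and fin: "finite (carrier G)" and c: "\<xi> \<in> characters G" and g: "g \<in> carrier G"
  shows "norm (\<xi> g) = 1"
proof -
  have "g [^]\<^bsub>G\<^esub> order G = \<one>\<^bsub>G\<^esub>" using G g by (simp add: group.pow_order_eq_1)
  hence p1: "\<xi> g ^ order G = 1" using char_pow[OF G c g, of "order G"] char_one[OF G c] by simp
  have "order G \<noteq> 0" using fin g by (auto simp: order_def)
  with power_eq_1_iff[OF p1] show ?thesis by simp
qed

lemma char_inv: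
  assumes G: "group G" and fin: "finite (carrier G)" and c: "\<xi> \<in> characters G" and g: "g \<in> carrier G"
  shows "\<xi> (inv\<^bsub>G\<^esub> g) = cnj (\<xi> g)"
proof -
  have ig: "inv\<^bsub>G\<^esub> g \<in> carrier G" using G g by (simp add: group.inv_closed)
  have "\<xi> (inv\<^bsub>G\<^esub> g) * \<xi> g = \<xi> (inv\<^bsub>G\<^esub> g \<otimes>\<^bsub>G\<^esub> g)"
    using c g ig unfolding characters_def by simp
  also have "\<dots> = 1" using G g char_one[OF G c] by (simp add: group.l_inv)
  finally have "\<xi> (inv\<^bsub>G\<^esub> g) * \<xi> g = 1" .
  moreover have "cnj (\<xi> g) * \<xi> g = 1"
    using char_norm[OF G fin c g] by (rule unit_cnj)
  moreover have "\<xi> g \<noteq> 0" using c g by (simp add: characters_def)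
  ultimately show ?thesis by (metis mult_right_cancel)
qed

lemma char_mult:
  assumes "\<xi> \<in> characters G" "x \<in> carrier G" "y \<in> carrier G"
  shows "\<xi> (x \<otimes>\<^bsub>G\<^esub> y) = \<xi> x * \<xi> y"
  using assms by (simp add: characters_def)

lemma char_orth:
  assumes G: "group G" and fin: "finite (carrier G)" and c: "\<xi> \<in> characters G" and d: "\<psi> \<in> characters G"
  shows "(\<Sum>g\<in>carrier G. \<xi> g * cnj (\<psi> g)) = (if \<xi> = \<psi> then of_nat (card (carrier G)) else 0)"
proof (cases "\<xi> = \<psi>")
  case True
  have "(\<Sum>g\<in>carrier G. \<xi> g * cnj (\<psi> g)) = (\<Sum>g\<in>carrier G. 1)"
  proof (rule sum.cong)
    fix g assume "g \<in> carrier G"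
    then show "\<xi> g * cnj (\<psi> g) = 1" using True char_norm[OF G fin c] unit_cnj
      by simp
  qed simp
  then show ?thesis using True by simp
next
  case False
  define h where "h g = \<xi> g * cnj (\<psi> g)" for g
  have hm: "h (x \<otimes>\<^bsub>G\<^esub> y) = h x * h y" if "x \<in> carrier G" "y \<in> carrier G" for x y
    using that char_mult[OF c] char_mult[OF d] by (simp add: h_def)
  have "\<exists>u\<in>carrier G. \<xi> u \<noteq> \<psi> u"
  proof (rule ccontr)
    assume a: "\<not> (\<exists>u\<in>carrier G. \<xi> u \<noteq> \<psi> u)"
    have "\<xi> x = \<psi> x" for x using a c d
      by (cases "x \<in> carrier G") (auto simp: characters_def extensional_def)
    hence "\<xi> = \<psi>" by auto
    with False show False ..
  qed
  then obtain u where u: "u \<in> carrier G" "\<xi> u \<noteq> \<psi> u" by blast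
  have "h u \<noteq> 1"
  proof
    assume "h u = 1"
    hence "\<xi> u * cnj (\<psi> u) * \<psi> u = \<psi> u" by (simp add: h_def)
    moreover have "cnj (\<psi> u) * \<psi> u = 1"
      using char_norm[OF G fin d u(1)] by (rule unit_cnj)
    ultimately show False using u(2) by (simp add: mult.assoc)
  qed
  have bij: "bij_betw (\<lambda>g. u \<otimes>\<^bsub>G\<^esub> g) (carrier G) (carrier G)"
  proof -
    have "inj_on (\<lambda>g. u \<otimes>\<^bsub>G\<^esub> g) (carrier G)" using G u by (simp add: group.inj_on_cmult)
    moreover have "(\<lambda>g. u \<otimes>\<^bsub>G\<^esub> g) ` carrier G = carrier G"
    proof
      show "(\<lambda>g. u \<otimes>\<^bsub>G\<^esub> g) ` carrier G \<subseteq> carrier G" using G u by (auto simp: group.is_monoid monoid.m_closed)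
      show "carrier G \<subseteq> (\<lambda>g. u \<otimes>\<^bsub>G\<^esub> g) ` carrier G"
      proof
        fix x assume x: "x \<in> carrier G"
        have "u \<otimes>\<^bsub>G\<^esub> (inv\<^bsub>G\<^esub> u \<otimes>\<^bsub>G\<^esub> x) = (u \<otimes>\<^bsub>G\<^esub> inv\<^bsub>G\<^esub> u) \<otimes>\<^bsub>G\<^esub> x"
          using G u x by (simp add: group.inv_closed group.is_monoid monoid.m_assoc)
        also have "\<dots> = x" using G u x by (simp add: group.r_inv group.is_monoid monoid.l_one)
        finally have "x = u \<otimes>\<^bsub>G\<^esub> (inv\<^bsub>G\<^esub> u \<otimes>\<^bsub>G\<^esub> x)" by simp
        moreover have "inv\<^bsub>G\<^esub> u \<otimes>\<^bsub>G\<^esub> x \<in> carrier G" using G u x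
          by (simp add: group.inv_closed group.is_monoid monoid.m_closed)
        ultimately show "x \<in> (\<lambda>g. u \<otimes>\<^bsub>G\<^esub> g) ` carrier G" by blast
      qed
    qed
    ultimately show ?thesis by (simp add: bij_betw_def)
  qed
  have r1: "(\<Sum>g\<in>carrier G. h g) = (\<Sum>g\<in>carrier G. h (u \<otimes>\<^bsub>G\<^esub> g))"
    by (rule sum.reindex_bij_betw[OF bij, symmetric])
  have r2: "(\<Sum>g\<in>carrier G. h (u \<otimes>\<^bsub>G\<^esub> g)) = h u * (\<Sum>g\<in>carrier G. h g)"
    unfolding sum_distrib_left by (rule sum.cong) (simp_all add: hm u(1))
  have eqs: "h u * (\<Sum>g\<in>carrier G. h g) = (\<Sum>g\<in>carrier G. h g)" by (metis r1 r2)
  have "(1 - h u) * (\<Sum>g\<in>carrier G. h g) = (\<Sum>g\<in>carrier G. h g) - h u * (\<Sum>g\<in>carrier G. h g)"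
    by (simp add: algebra_simps)
  also have "\<dots> = 0" by (simp only: eqs diff_self)
  finally have "(1 - h u) * (\<Sum>g\<in>carrier G. h g) = 0" .
  hence "(\<Sum>g\<in>carrier G. h g) = 0" using \<open>h u \<noteq> 1\<close> by simp
  then show ?thesis using False by (simp add: h_def)
qed



lemma bessel:
  fixes G :: "('a, 'b) monoid_scheme" and Xs :: "('a \<Rightarrow> complex) set" and A :: "'a set"
  assumes G: "group G" and fin: "finite (carrier G)" and Xs: "Xs \<subseteq> characters G" "finite Xs"
    and A: "A \<subseteq> carrier G"
  shows "(\<Sum>\<xi>\<in>Xs. (norm (\<Sum>x\<in>A. \<xi> x))^2) \<le> real (card (carrier G)) * real (card A)"
proof -
  define C where "C = carrier G"
  define N :: complex where "N = of_nat (card C)"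
  define a where "a \<xi> = (\<Sum>x\<in>A. cnj (\<xi> x))" for \<xi> :: "'a \<Rightarrow> complex"
  define \<Phi> where "\<Phi> g = (\<Sum>\<xi>\<in>Xs. a \<xi> * \<xi> g)" for g
  define v :: "'a \<Rightarrow> complex" where "v g = (if g \<in> A then 1 else 0)" for g
  define Mr where "Mr = (\<Sum>\<xi>\<in>Xs. (norm (a \<xi>))^2)"
  define M where "M = (\<Sum>\<xi>\<in>Xs. a \<xi> * cnj (a \<xi>))"
  have finC: "finite C" using fin by (simp add: C_def)
  have finA: "finite A" using A fin finite_subset by blast
  have MMr: "M = of_real Mr"
    unfolding M_def Mr_def of_real_sum by (rule sum.cong[OF refl], rule complex_norm_square[symmetric])
  have cM: "cnj M = M" using MMr by simp
  have e1: "(\<Sum>g\<in>C. v g * cnj (\<Phi> g)) = M"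
  proof -
    have "(\<Sum>g\<in>C. v g * cnj (\<Phi> g)) = (\<Sum>g\<in>C. if g \<in> A then cnj (\<Phi> g) else 0)"
      by (rule sum.cong) (auto simp: v_def)
    also have "\<dots> = (\<Sum>g\<in>C \<inter> A. cnj (\<Phi> g))" using finC by (simp add: sum.inter_restrict)
    also have "C \<inter> A = A" using A by (auto simp: C_def)
    also have "(\<Sum>g\<in>A. cnj (\<Phi> g)) = (\<Sum>g\<in>A. \<Sum>\<xi>\<in>Xs. cnj (a \<xi>) * cnj (\<xi> g))"
      by (simp add: \<Phi>_def)
    also have "\<dots> = (\<Sum>\<xi>\<in>Xs. \<Sum>g\<in>A. cnj (a \<xi>) * cnj (\<xi> g))" by (rule sum.swap)
    also have "\<dots> = (\<Sum>\<xi>\<in>Xs. cnj (a \<xi>) * a \<xi>)" by (simp add: a_def sum_distrib_left)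
    finally show ?thesis by (simp add: M_def mult.commute)
  qed
  have e4: "(\<Sum>g\<in>C. \<Phi> g * cnj (v g)) = M"
  proof -
    have "(\<Sum>g\<in>C. \<Phi> g * cnj (v g)) = cnj (\<Sum>g\<in>C. v g * cnj (\<Phi> g))"
      by (simp add: mult.commute)
    then show ?thesis using e1 cM by simp
  qed
  have e3: "(\<Sum>g\<in>C. v g * cnj (v g)) = of_nat (card A)"
  proof -
    have "(\<Sum>g\<in>C. v g * cnj (v g)) = (\<Sum>g\<in>C. if g \<in> A then 1 else 0)"
      by (rule sum.cong) (auto simp: v_def)
    also have "\<dots> = of_nat (card (C \<inter> A))" using finC by (simp add: sum.inter_restrict[symmetric])
    also have "C \<inter> A = A" using A by (auto simp: C_def)
    finally show ?thesis .
  qed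
  have e2: "(\<Sum>g\<in>C. \<Phi> g * cnj (\<Phi> g)) = N * M"
  proof -
    have "(\<Sum>g\<in>C. \<Phi> g * cnj (\<Phi> g))
        = (\<Sum>g\<in>C. \<Sum>\<xi>\<in>Xs. \<Sum>\<psi>\<in>Xs. (a \<xi> * cnj (a \<psi>)) * (\<xi> g * cnj (\<psi> g)))"
      by (simp add: \<Phi>_def sum_product mult_ac)
    also have "\<dots> = (\<Sum>\<xi>\<in>Xs. \<Sum>g\<in>C. \<Sum>\<psi>\<in>Xs. (a \<xi> * cnj (a \<psi>)) * (\<xi> g * cnj (\<psi> g)))"
      by (rule sum.swap)
    also have "\<dots> = (\<Sum>\<xi>\<in>Xs. \<Sum>\<psi>\<in>Xs. \<Sum>g\<in>C. (a \<xi> * cnj (a \<psi>)) * (\<xi> g * cnj (\<psi> g)))"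
      by (rule sum.cong[OF refl], rule sum.swap)
    also have "\<dots> = (\<Sum>\<xi>\<in>Xs. \<Sum>\<psi>\<in>Xs. (a \<xi> * cnj (a \<psi>)) * (if \<xi> = \<psi> then N else 0))"
    proof (rule sum.cong[OF refl], rule sum.cong[OF refl])
      fix \<xi> \<psi> assume xx: "\<xi> \<in> Xs" "\<psi> \<in> Xs"
      then have c2: "\<xi> \<in> characters G" "\<psi> \<in> characters G" using Xs by auto
      then have "(\<Sum>g\<in>C. \<xi> g * cnj (\<psi> g)) = (if \<xi> = \<psi> then N else 0)"
        using char_orth[OF G fin c2] by (simp add: C_def N_def)
      then show "(\<Sum>g\<in>C. (a \<xi> * cnj (a \<psi>)) * (\<xi> g * cnj (\<psi> g))) = (a \<xi> * cnj (a \<psi>)) * (if \<xi> = \<psi> then N else 0)"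
        by (simp add: sum_distrib_left[symmetric])
    qed
    also have "\<dots> = (\<Sum>\<xi>\<in>Xs. a \<xi> * cnj (a \<xi>) * N)"
      by (simp add: Xs(2) if_distrib sum.delta cong: if_cong)
    finally show ?thesis by (simp add: M_def sum_distrib_left mult_ac)
  qed
  define u where "u g = N * v g - \<Phi> g" for g
  have cN: "cnj N = N" by (simp add: N_def)
  have "(\<Sum>g\<in>C. u g * cnj (u g))
      = (\<Sum>g\<in>C. N * N * (v g * cnj (v g)) - N * (v g * cnj (\<Phi> g)) - N * (\<Phi> g * cnj (v g)) + \<Phi> g * cnj (\<Phi> g))"
    by (rule sum.cong) (auto simp: u_def cN algebra_simps)
  also have "\<dots> = N * N * of_nat (card A) - N * M - N * M + N * M"
    by (simp add: sum.distrib sum_subtractf sum_distrib_left[symmetric] e1 e2 e3 e4)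
  finally have eq: "(\<Sum>g\<in>C. u g * cnj (u g)) = N * N * of_nat (card A) - N * M" by simp
  have "(\<Sum>g\<in>C. u g * cnj (u g)) = of_real (\<Sum>g\<in>C. (norm (u g))^2)"
    unfolding of_real_sum by (rule sum.cong[OF refl], rule complex_norm_square[symmetric])
  with eq have "of_real (\<Sum>g\<in>C. (norm (u g))^2) = (of_real (real (card C) * real (card C) * real (card A) - real (card C) * Mr) :: complex)"
    by (simp add: N_def MMr)
  hence "(\<Sum>g\<in>C. (norm (u g))^2) = real (card C) * real (card C) * real (card A) - real (card C) * Mr"
    using of_real_eq_iff by blast
  moreover have "0 \<le> (\<Sum>g\<in>C. (norm (u g))^2)" by (simp add: sum_nonneg)
  ultimately have "real (card C) * Mr \<le> real (card C) * (real (card C) * real (card A))" by (simp add: algebra_simps)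
  moreover have "card C > 0" using finC A by (metis C_def G card_gt_0_iff empty_iff group.is_monoid monoid.one_closed)
  ultimately have "Mr \<le> real (card C) * real (card A)" by simp
  moreover have "Mr = (\<Sum>\<xi>\<in>Xs. (norm (\<Sum>x\<in>A. \<xi> x))^2)"
  proof -
    have "norm (a \<xi>) = norm (\<Sum>x\<in>A. \<xi> x)" for \<xi>
    proof -
      have "a \<xi> = cnj (\<Sum>x\<in>A. \<xi> x)" by (simp add: a_def cnj_sum)
      then show ?thesis by (metis complex_mod_cnj)
    qed
    then show ?thesis by (simp add: Mr_def)
  qed
  ultimately show ?thesis by (simp add: C_def)
qed



lemma main_bound:
  fixes G :: "('a, 'b) monoid_scheme" and S A :: "'a set" and t :: 'a
  assumes CG: "comm_group G" and fin: "finite (carrier G)" and A: "A \<subseteq> carrier G" "A \<noteq> {}"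
    and t: "t \<in> carrier G"
    and sub: "\<And>x y. x \<in> A \<Longrightarrow> y \<in> A \<Longrightarrow> t \<otimes>\<^bsub>G\<^esub> x \<otimes>\<^bsub>G\<^esub> inv\<^bsub>G\<^esub> y \<in> S"
  shows "shape_param G S \<le> real (card S) / real (card A)"
proof -
  have G: "group G" using CG by (simp add: comm_group.axioms(2))
  have finA: "finite A" using A fin finite_subset by blast
  define C where "C = carrier G"
  define N where "N = card C"
  define P where "P = A \<times> A"
  define f where "f p = t \<otimes>\<^bsub>G\<^esub> fst p \<otimes>\<^bsub>G\<^esub> inv\<^bsub>G\<^esub> snd p" for p
  define c :: "'a \<Rightarrow> complex" where "c g = (\<Sum>p\<in>P. if f p = g then 1 else 0)" for g
  have finP: "finite P" using finA by (simp add: P_def)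
  have fC: "f p \<in> C" if "p \<in> P" for p
  proof -
    have x: "fst p \<in> carrier G" and y: "snd p \<in> carrier G" using that A by (auto simp: P_def)
    have "inv\<^bsub>G\<^esub> snd p \<in> carrier G" using y G by (simp add: group.inv_closed)
    then show ?thesis using x t G unfolding f_def C_def by (simp add: group.is_monoid monoid.m_closed)
  qed
  have supp: "\<forall>g. g \<notin> S \<longrightarrow> c g = 0"
  proof (intro allI impI)
    fix g assume gS: "g \<notin> S"
    have "(if f p = g then 1 else 0) = (0::complex)" if "p \<in> P" for p
      using that sub gS by (auto simp: P_def f_def)
    then show "c g = 0" by (simp add: c_def)
  qed
  have fc: "fourier_coeff G c \<psi> = (\<Sum>p\<in>P. \<psi> (inv\<^bsub>G\<^esub> f p))" for \<psi>
  proof -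
    have "fourier_coeff G c \<psi> = (\<Sum>g\<in>C. \<Sum>p\<in>P. if f p = g then \<psi> (inv\<^bsub>G\<^esub> g) else 0)"
      unfolding fourier_coeff_def C_def c_def sum_distrib_right
      by (rule sum.cong[OF refl], rule sum.cong[OF refl]) simp
    also have "\<dots> = (\<Sum>p\<in>P. \<Sum>g\<in>C. if f p = g then \<psi> (inv\<^bsub>G\<^esub> g) else 0)" by (rule sum.swap)
    also have "\<dots> = (\<Sum>p\<in>P. \<psi> (inv\<^bsub>G\<^esub> f p))"
    proof (rule sum.cong[OF refl])
      fix p assume "p \<in> P"
      then have "f p \<in> C" by (rule fC)
      then show "(\<Sum>g\<in>C. if f p = g then \<psi> (inv\<^bsub>G\<^esub> g) else 0) = \<psi> (inv\<^bsub>G\<^esub> f p)"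
        using fin by (simp add: C_def sum.delta)
    qed
    finally show ?thesis .
  qed
  have triv: "fourier_coeff G c (trivial_character G) = of_nat (card A * card A)"
  proof -
    have "fourier_coeff G c (trivial_character G) = (\<Sum>p\<in>P. 1)"
      unfolding fc
    proof (rule sum.cong[OF refl])
      fix p assume "p \<in> P"
      then have "inv\<^bsub>G\<^esub> f p \<in> carrier G" using fC G by (simp add: C_def group.inv_closed)
      then show "trivial_character G (inv\<^bsub>G\<^esub> f p) = 1" by (simp add: trivial_character_def)
    qed
    then show ?thesis by (simp add: P_def card_cartesian_product)
  qed
  have cardA: "card A > 0" using finA A by (simp add: card_gt_0_iff)
  have trivnz: "fourier_coeff G c (trivial_character G) \<noteq> 0" using triv cardA by simp
  have chr: "norm (fourier_coeff G c \<psi>) = (norm (\<Sum>x\<in>A. \<psi> x))^2" if psi: "\<psi> \<in> characters G" for \<psi>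
  proof -
    have "fourier_coeff G c \<psi> = (\<Sum>p\<in>P. cnj (\<psi> t) * (cnj (\<psi> (fst p)) * \<psi> (snd p)))"
      unfolding fc
    proof (rule sum.cong[OF refl])
      fix p assume p: "p \<in> P"
      have x: "fst p \<in> carrier G" and y: "snd p \<in> carrier G" using p A by (auto simp: P_def)
      have iy: "inv\<^bsub>G\<^esub> snd p \<in> carrier G" using y G by (simp add: group.inv_closed)
      have tx: "t \<otimes>\<^bsub>G\<^esub> fst p \<in> carrier G" using t x G by (simp add: group.is_monoid monoid.m_closed)
      have "\<psi> (inv\<^bsub>G\<^esub> f p) = cnj (\<psi> (f p))" using char_inv[OF G fin psi] fC[OF p] by (simp add: C_def)
      also have "\<psi> (f p) = \<psi> t * \<psi> (fst p) * \<psi> (inv\<^bsub>G\<^esub> snd p)"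
        unfolding f_def using char_mult[OF psi tx iy] char_mult[OF psi t x] by simp
      also have "\<psi> (inv\<^bsub>G\<^esub> snd p) = cnj (\<psi> (snd p))" using char_inv[OF G fin psi y] .
      finally show "\<psi> (inv\<^bsub>G\<^esub> f p) = cnj (\<psi> t) * (cnj (\<psi> (fst p)) * \<psi> (snd p))" by simp
    qed
    also have "\<dots> = cnj (\<psi> t) * ((\<Sum>x\<in>A. cnj (\<psi> x)) * (\<Sum>y\<in>A. \<psi> y))"
    proof -
      have "(\<Sum>p\<in>A \<times> A. cnj (\<psi> (fst p)) * \<psi> (snd p)) = (\<Sum>x\<in>A. cnj (\<psi> x)) * (\<Sum>y\<in>A. \<psi> y)"
        unfolding sum_product sum.cartesian_product by (simp add: case_prod_beta)
      then show ?thesis unfolding P_def sum_distrib_left[symmetric] by simp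
    qed
    finally have "norm (fourier_coeff G c \<psi>) = norm (\<psi> t) * (norm (\<Sum>x\<in>A. cnj (\<psi> x)) * norm (\<Sum>y\<in>A. \<psi> y))"
      by (simp add: norm_mult)
    also have "norm (\<psi> t) = 1" using char_norm[OF G fin psi t] .
    also have "norm (\<Sum>x\<in>A. cnj (\<psi> x)) = norm (\<Sum>x\<in>A. \<psi> x)"
      by (metis cnj_sum complex_mod_cnj)
    finally show ?thesis by (simp add: power2_eq_square)
  qed
  have sumb: "(\<Sum>\<psi>\<in>characters G. cmod (fourier_coeff G c \<psi>)) \<le> real N * real (card A)"
  proof (cases "finite (characters G)")
    case True
    have "(\<Sum>\<psi>\<in>characters G. cmod (fourier_coeff G c \<psi>)) = (\<Sum>\<psi>\<in>characters G. (norm (\<Sum>x\<in>A. \<psi> x))^2)"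
      by (rule sum.cong[OF refl]) (simp add: chr)
    also have "\<dots> \<le> real N * real (card A)"
      using bessel[OF G fin subset_refl True A(1)] by (simp add: N_def C_def)
    finally show ?thesis .
  qed simp
  define r where "r = (\<Sum>\<psi>\<in>characters G. cmod (fourier_coeff G c \<psi>)) / cmod (fourier_coeff G c (trivial_character G))"
  define Q where "Q = {(\<Sum>\<psi>\<in>characters G. cmod (fourier_coeff G c \<psi>)) / cmod (fourier_coeff G c (trivial_character G)) | c.
           (\<forall>g. g \<notin> S \<longrightarrow> c g = 0) \<and> fourier_coeff G c (trivial_character G) \<noteq> 0}"
  have rQ: "r \<in> Q" unfolding Q_def r_def using supp trivnz by blast
  have bdd: "bdd_below Q" unfolding Q_def
    by (rule bdd_belowI[of _ 0]) (auto intro!: divide_nonneg_nonneg sum_nonneg)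
  have infr: "Inf Q \<le> r" by (rule cInf_lower[OF rQ bdd])
  have "r \<le> real N * real (card A) / (real (card A) * real (card A))"
  proof -
    have tn: "cmod (fourier_coeff G c (trivial_character G)) = real (card A) * real (card A)"
      unfolding triv of_nat_mult norm_mult norm_of_nat by simp
    show ?thesis unfolding r_def tn by (rule divide_right_mono[OF sumb]) simp
  qed
  also have "\<dots> = real N / real (card A)" using cardA by simp
  finally have rb: "r \<le> real N / real (card A)" .
  have Npos: "N > 0" using fin G unfolding N_def C_def
    by (metis card_gt_0_iff empty_iff group.is_monoid monoid.one_closed)
  have "shape_param G S = real (card S) / real N * Inf Q"
    by (simp add: shape_param_def Q_def N_def C_def)
  also have "\<dots> \<le> real (card S) / real N * (real N / real (card A))"
    by (rule mult_left_mono) (use infr rb in auto)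
  also have "\<dots> = real (card S) / real (card A)" using Npos by simp
  finally show ?thesis .
qed



lemma modsolve:
  fixes u j w N :: int
  assumes "0 \<le> u" "u < N" "(u + j) mod N = w mod N"
  shows "u = (w - j) mod N"
proof -
  have "(u + j - j) mod N = (w - j) mod N" by (rule mod_diff_cong[OF assms(3) refl])
  then show ?thesis using assms(1,2) by simp
qed

lemma interval_data:
  fixes G :: "('a, 'b) monoid_scheme" and S :: "'a set"
  assumes CG: "comm_group G" and fin: "finite (carrier G)" and GI: "group_interval G S"
  shows "\<exists>A t. A \<subseteq> carrier G \<and> A \<noteq> {} \<and> t \<in> carrier G \<and>
     (\<forall>x\<in>A. \<forall>y\<in>A. t \<otimes>\<^bsub>G\<^esub> x \<otimes>\<^bsub>G\<^esub> inv\<^bsub>G\<^esub> y \<in> S) \<and> real (card S) \<le> 2 * real (card A)"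
proof -
  have G: "group G" using CG by (simp add: comm_group.axioms(2))
  from GI obtain H where Hs: "subgroup H G" and fi: "full_interval (G\<lparr>carrier := H\<rparr>) S"
    by (auto simp: group_interval_def)
  from fi obtain n \<pi> T where n1: "n \<ge> 1"
    and hom: "\<pi> \<in> hom (G\<lparr>carrier := H\<rparr>) (integer_mod_group n)"
    and surj: "\<pi> ` H = carrier (integer_mod_group n)"
    and TT: "ZnZ_std_interval n T" and SS: "S = {x \<in> H. \<pi> x \<in> T}"
    unfolding full_interval_def by auto
  from TT obtain J where ZJ: "Z_interval J" and TJ: "T = (\<lambda>k. k mod int n) ` J"
    unfolding ZnZ_std_interval_def by blast
  from ZJ obtain a b :: real where Jne: "J \<noteq> {}" and Jab: "J = {k :: int. a \<le> of_int k \<and> of_int k \<le> b}"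
    unfolding Z_interval_def by blast
  define p where "p = \<lceil>a\<rceil>"
  define q where "q = \<lfloor>b\<rfloor>"
  have Jpq: "J = {p..q}" by (auto simp: Jab p_def q_def ceiling_le_iff le_floor_iff)
  have pq: "p \<le> q" using Jne Jpq by auto
  have HG: "H \<subseteq> carrier G" using Hs by (rule subgroup.subset)
  have mc: "u \<otimes>\<^bsub>G\<^esub> v \<in> H" if "u \<in> H" "v \<in> H" for u v using Hs that by (rule subgroup.m_closed)
  have ic: "inv\<^bsub>G\<^esub> u \<in> H" if "u \<in> H" for u using Hs that by (rule subgroup.m_inv_closed)
  have piM: "\<pi> (u \<otimes>\<^bsub>G\<^esub> v) = (\<pi> u + \<pi> v) mod int n" if "u \<in> H" "v \<in> H" for u v
    using hom_mult[OF hom, of u v] that by simp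
  have n0: "int n > 0" using n1 by simp
  have piR: "0 \<le> \<pi> u \<and> \<pi> u < int n" if "u \<in> H" for u
  proof -
    have "\<pi> u \<in> carrier (integer_mod_group n)" using surj that by blast
    then show ?thesis using n1 by (simp add: carrier_integer_mod_group)
  qed
  have piS: "\<exists>x\<in>H. \<pi> x = k mod int n" for k
  proof -
    have "k mod int n \<in> carrier (integer_mod_group n)" using n1 n0
      by (simp add: carrier_integer_mod_group)
    then show ?thesis using surj by (metis imageE)
  qed
  define L where "L = q - p + 1"
  define m where "m = (L + 1) div 2"
  have m1: "1 \<le> m" and m2: "2 * m \<le> L + 1" and m3: "L \<le> 2 * m"
    using pq unfolding m_def L_def by presburger+
  define A where "A = {x \<in> H. \<exists>i. 0 \<le> i \<and> i \<le> m - 1 \<and> \<pi> x = i mod int n}"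
  have AG: "A \<subseteq> carrier G" using HG by (auto simp: A_def)
  have Ane: "A \<noteq> {}"
  proof -
    obtain x where "x \<in> H" "\<pi> x = 0 mod int n" using piS by blast
    then have "x \<in> A" using m1 unfolding A_def by (intro CollectI conjI exI[of _ 0]) auto
    then show ?thesis by blast
  qed
  obtain t where tH: "t \<in> H" and pit: "\<pi> t = (p + m - 1) mod int n" using piS by blast
  have sub: "t \<otimes>\<^bsub>G\<^esub> x \<otimes>\<^bsub>G\<^esub> inv\<^bsub>G\<^esub> y \<in> S" if xA: "x \<in> A" and yA: "y \<in> A" for x y
  proof -
    obtain i where i: "0 \<le> i" "i \<le> m - 1" "\<pi> x = i mod int n" and xH: "x \<in> H" using xA by (auto simp: A_def)
    obtain j where j: "0 \<le> j" "j \<le> m - 1" "\<pi> y = j mod int n" and yH: "y \<in> H" using yA by (auto simp: A_def)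
    define z where "z = t \<otimes>\<^bsub>G\<^esub> x \<otimes>\<^bsub>G\<^esub> inv\<^bsub>G\<^esub> y"
    have zH: "z \<in> H" unfolding z_def using mc ic tH xH yH by blast
    have tG: "t \<in> carrier G" and xG: "x \<in> carrier G" and yG: "y \<in> carrier G" using HG tH xH yH by auto
    have "z \<otimes>\<^bsub>G\<^esub> y = (t \<otimes>\<^bsub>G\<^esub> x) \<otimes>\<^bsub>G\<^esub> (inv\<^bsub>G\<^esub> y \<otimes>\<^bsub>G\<^esub> y)"
      unfolding z_def using G tG xG yG by (simp add: group.inv_closed group.is_monoid monoid.m_assoc monoid.m_closed)
    also have "\<dots> = t \<otimes>\<^bsub>G\<^esub> x"
      using G tG xG yG by (simp add: group.l_inv group.is_monoid monoid.r_one monoid.m_closed)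
    finally have zy: "z \<otimes>\<^bsub>G\<^esub> y = t \<otimes>\<^bsub>G\<^esub> x" .
    have "(\<pi> z + j) mod int n = (\<pi> z + \<pi> y) mod int n" using j(3) by (simp add: mod_simps)
    also have "\<dots> = \<pi> (t \<otimes>\<^bsub>G\<^esub> x)" using piM[OF zH yH] zy by simp
    also have "\<dots> = (p + m - 1 + i) mod int n" using piM[OF tH xH] pit i(3) by (simp add: mod_simps)
    finally have "(\<pi> z + j) mod int n = (p + m - 1 + i) mod int n" .
    then have pz: "\<pi> z = (p + m - 1 + i - j) mod int n" using piR[OF zH] modsolve by blast
    have "p + m - 1 + i - j \<in> J" using Jpq i j m2 unfolding L_def by auto
    then have "\<pi> z \<in> T" using pz TJ by blast
    then show ?thesis using zH SS z_def by blast
  qed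
  obtain s1 where s1H: "s1 \<in> H" and pis1: "\<pi> s1 = p mod int n" using piS by blast
  obtain s2 where s2H: "s2 \<in> H" and pis2: "\<pi> s2 = (p + m) mod int n" using piS by blast
  have shift: "\<exists>w\<in>H. x = s \<otimes>\<^bsub>G\<^esub> w \<and> \<pi> w = (k - e) mod int n"
    if sH: "s \<in> H" and xH: "x \<in> H" and ps: "\<pi> s = e mod int n" and px: "\<pi> x = k mod int n" for s x e k
  proof -
    define w where "w = inv\<^bsub>G\<^esub> s \<otimes>\<^bsub>G\<^esub> x"
    have wH: "w \<in> H" unfolding w_def using mc ic sH xH by blast
    have sG: "s \<in> carrier G" and xG: "x \<in> carrier G" using HG sH xH by auto
    have "s \<otimes>\<^bsub>G\<^esub> w = (s \<otimes>\<^bsub>G\<^esub> inv\<^bsub>G\<^esub> s) \<otimes>\<^bsub>G\<^esub> x"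
      unfolding w_def using G sG xG by (simp add: group.inv_closed group.is_monoid monoid.m_assoc)
    also have "\<dots> = x" using G sG xG by (simp add: group.r_inv group.is_monoid monoid.l_one)
    finally have sw: "x = s \<otimes>\<^bsub>G\<^esub> w" by simp
    have "(\<pi> w + e) mod int n = (\<pi> s + \<pi> w) mod int n" using ps by (simp add: mod_simps add.commute)
    also have "\<dots> = \<pi> x" using piM[OF sH wH] sw by simp
    also have "\<dots> = k mod int n" by (rule px)
    finally have "\<pi> w = (k - e) mod int n" using piR[OF wH] modsolve by blast
    then show ?thesis using wH sw by blast
  qed
  have cover: "S \<subseteq> (\<lambda>w. s1 \<otimes>\<^bsub>G\<^esub> w) ` A \<union> (\<lambda>w. s2 \<otimes>\<^bsub>G\<^esub> w) ` A"
  proof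
    fix x assume xS: "x \<in> S"
    then have xH: "x \<in> H" and "\<pi> x \<in> T" using SS by auto
    then obtain k where kJ: "k \<in> J" and px: "\<pi> x = k mod int n" using TJ by blast
    have kpq: "p \<le> k" "k \<le> q" using kJ Jpq by auto
    show "x \<in> (\<lambda>w. s1 \<otimes>\<^bsub>G\<^esub> w) ` A \<union> (\<lambda>w. s2 \<otimes>\<^bsub>G\<^esub> w) ` A"
    proof (cases "k \<le> p + m - 1")
      case True
      obtain w where w: "w \<in> H" "x = s1 \<otimes>\<^bsub>G\<^esub> w" "\<pi> w = (k - p) mod int n"
        using shift[OF s1H xH pis1 px] by blast
      have "w \<in> A" unfolding A_def using w True kpq by (auto intro!: exI[of _ "k - p"])
      then show ?thesis using w by blast
    next
      case False
      obtain w where w: "w \<in> H" "x = s2 \<otimes>\<^bsub>G\<^esub> w" "\<pi> w = (k - (p + m)) mod int n"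
        using shift[OF s2H xH pis2 px] by blast
      have "k - (p + m) \<le> m - 1" using kpq m3 unfolding L_def by simp
      then have "w \<in> A" unfolding A_def using w False by (auto intro!: exI[of _ "k - (p + m)"])
      then show ?thesis using w by blast
    qed
  qed
  have finA: "finite A" using AG fin finite_subset by blast
  have "card S \<le> card ((\<lambda>w. s1 \<otimes>\<^bsub>G\<^esub> w) ` A \<union> (\<lambda>w. s2 \<otimes>\<^bsub>G\<^esub> w) ` A)"
    by (rule card_mono) (use finA cover in auto)
  also have "\<dots> \<le> card ((\<lambda>w. s1 \<otimes>\<^bsub>G\<^esub> w) ` A) + card ((\<lambda>w. s2 \<otimes>\<^bsub>G\<^esub> w) ` A)"
    by (rule card_Un_le)
  also have "\<dots> \<le> card A + card A" by (intro add_mono card_image_le finA)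
  finally have "real (card S) \<le> 2 * real (card A)" by simp
  moreover have "t \<in> carrier G" using HG tH by auto
  ultimately show ?thesis using AG Ane sub by blast
qed

theorem lemma3p5:
  fixes G :: "('a, 'b) monoid_scheme" and S :: "'a set"
  assumes "comm_group G" and "finite (carrier G)" and "group_interval G S"
  shows "shape_param G S \<le> 2"
proof -
  obtain A t where A: "A \<subseteq> carrier G" "A \<noteq> {}" and t: "t \<in> carrier G"
    and sub: "\<forall>x\<in>A. \<forall>y\<in>A. t \<otimes>\<^bsub>G\<^esub> x \<otimes>\<^bsub>G\<^esub> inv\<^bsub>G\<^esub> y \<in> S"
    and card: "real (card S) \<le> 2 * real (card A)"
    using interval_data[OF assms] by blast
  have "shape_param G S \<le> real (card S) / real (card A)"
    by (rule main_bound[OF assms(1,2) A t]) (use sub in blast)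
  also have "\<dots> \<le> 2"
  proof -
    have "card A > 0" using A assms(2) by (meson card_gt_0_iff finite_subset)
    then show ?thesis using card by (simp add: divide_le_eq)
  qed
  finally show ?thesis .
qed


end
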